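(* Let $\Omega$ be either the bidisk $\mathbb{D}^2$ or the unit ball $\mathbb{B}_2$ in $\mathbb{C}^2$, and let $\Phi(z_1,z_2)=(z_1^2+z_2^2,\ z_1^2z_2^2)$. Then $\Phi(\Omega)$ is open and $\Phi$ is a holomorphic proper map from $\Omega$ onto $\Phi(\Omega)$.
   Context: A holomorphic map $\Phi:\Omega\to\Omega'$ between domains is proper if $\Phi^{-1}(K)$ is compact for every compact $K\subseteq\Omega'$. *)

theory Defs
  imports "HOL-Analysis.Analysis"
begin

text \<open>We model \<open>\<complex>\<^sup>2\<close> as the product type \<open>complex \<times> complex\<close>
  (its norm is the Euclidean norm).\<close>

definition cscale2 :: "complex \<Rightarrow> complex \<times> complex \<Rightarrow> complex \<times> complex" where
  "cscale2 c v = (c * fst v, c * snd v)"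

definition holomorphic2_on ::
  "(complex \<times> complex \<Rightarrow> complex \<times> complex) \<Rightarrow> (complex \<times> complex) set \<Rightarrow> bool" where
  "holomorphic2_on F S \<longleftrightarrow>
     (\<forall>z\<in>S. \<exists>D. (F has_derivative D) (at z) \<and> (\<forall>c v. D (cscale2 c v) = cscale2 c (D v)))"

definition proper_map_on ::
  "('a::topological_space \<Rightarrow> 'b::topological_space) \<Rightarrow> 'a set \<Rightarrow> 'b set \<Rightarrow> bool" where
  "proper_map_on F S T \<longleftrightarrow> (\<forall>K. K \<subseteq> T \<and> compact K \<longrightarrow> compact {z\<in>S. F z \<in> K})"

definition bidisk :: "(complex \<times> complex) set" where
  "bidisk = {(z1, z2). cmod z1 < 1 \<and> cmod z2 < 1}"

definition unit_ball2 :: "(complex \<times> complex) set" where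
  "unit_ball2 = {(z1, z2). (cmod z1)\<^sup>2 + (cmod z2)\<^sup>2 < 1}"

definition Phi :: "complex \<times> complex \<Rightarrow> complex \<times> complex" where
  "Phi z = ((fst z)\<^sup>2 + (snd z)\<^sup>2, (fst z)\<^sup>2 * (snd z)\<^sup>2)"

end

theory Submission
  imports Defs
begin

lemma root_bound:
  fixes a b :: complex
  shows "cmod a \<le> 1 + cmod (a+b) + cmod (a*b)"
proof (cases "cmod a \<le> 1")
  case True then show ?thesis using norm_ge_zero[of "a+b"] norm_ge_zero[of "a*b"] by linarith
next
  case False
  have "a*a = (a+b)*a - a*b" by (simp add: algebra_simps)
  hence "cmod a * cmod a \<le> cmod (a+b) * cmod a + cmod (a*b)"
    by (metis norm_mult norm_triangle_ineq4)
  also have "\<dots> \<le> cmod (a+b) * cmod a + cmod (a*b) * cmod a"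
    using False mult_left_mono[of 1 "cmod a" "cmod (a*b)"] by (simp add: mult.commute)
  also have "\<dots> = (cmod (a+b) + cmod (a*b)) * cmod a" by (simp add: algebra_simps)
  finally have c: "cmod a * cmod a \<le> (cmod (a+b) + cmod (a*b)) * cmod a" .
  have "0 < cmod a" using False by linarith
  from mult_right_le_imp_le[OF c this] have "cmod a \<le> cmod (a+b) + cmod (a*b)" .
  then show ?thesis by simp
qed

lemma Phi_bound: "(norm z)\<^sup>2 \<le> 2 + 4 * norm (Phi z)"
proof -
  obtain x y where z: "z = (x,y)" by force
  have f: "fst (Phi z) = x\<^sup>2+y\<^sup>2" "snd (Phi z) = x\<^sup>2*y\<^sup>2" by (simp_all add: Phi_def z)
  have pz: "Phi z = (x\<^sup>2+y\<^sup>2, x\<^sup>2*y\<^sup>2)" by (simp add: Phi_def z)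
  have n: "norm (Phi z) \<ge> cmod (x\<^sup>2+y\<^sup>2)" "norm (Phi z) \<ge> cmod (x\<^sup>2*y\<^sup>2)"
    unfolding pz by (rule norm_fst_le, rule norm_snd_le)
  have "cmod (x\<^sup>2) \<le> 1 + cmod (x\<^sup>2+y\<^sup>2) + cmod (x\<^sup>2*y\<^sup>2)" by (rule root_bound)
  moreover have "cmod (y\<^sup>2) \<le> 1 + cmod (x\<^sup>2+y\<^sup>2) + cmod (x\<^sup>2*y\<^sup>2)"
    using root_bound[of "y\<^sup>2" "x\<^sup>2"] by (simp add: add.commute mult.commute)
  moreover have "(norm z)\<^sup>2 = cmod (x\<^sup>2) + cmod (y\<^sup>2)"
    by (simp add: z norm_Pair norm_power)
  ultimately show ?thesis using n by linarith
qed

lemma Phi_cont: "continuous_on S Phi"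
  unfolding Phi_def by (intro continuous_intros)

lemma Phi_compact_preimage:
  assumes "compact U" shows "compact (Phi -` U)"
proof -
  have cl: "closed (Phi -` U)"
    using closed_vimage[OF compact_imp_closed[OF assms] Phi_cont] .
  obtain B where B: "\<And>u. u \<in> U \<Longrightarrow> norm u \<le> B"
    using compact_imp_bounded[OF assms] bounded_iff by blast
  have "norm z \<le> 3 + 4*B" if "Phi z \<in> U" for z
  proof -
    have "(norm z)\<^sup>2 \<le> 2 + 4*B" using Phi_bound[of z] B[OF that] by linarith
    moreover have "norm z \<le> 1 + (norm z)\<^sup>2"
    proof -
      have "0 \<le> (norm z - 1)\<^sup>2" by simp
      moreover have "(norm z - 1)\<^sup>2 = (norm z)\<^sup>2 - 2*norm z + 1" by (simp add: power2_diff)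
      moreover have "0 \<le> (norm z)\<^sup>2" by simp
      ultimately show ?thesis by linarith
    qed
    ultimately show ?thesis by linarith
  qed
  hence "bounded (Phi -` U)" unfolding bounded_iff by blast
  with cl show ?thesis by (simp add: compact_eq_bounded_closed)
qed

lemma sq_cases:
  fixes a b c d :: complex
  assumes "a + b = c + d" "a*b = c*d"
  shows "(a = c \<and> b = d) \<or> (a = d \<and> b = c)"
proof -
  have "(a-c)*(a-d) = a*a - a*(c+d) + c*d" by (simp add: algebra_simps)
  also have "\<dots> = a*a - a*(a+b) + a*b" using assms by simp
  also have "\<dots> = 0" by (simp add: algebra_simps)
  finally have "a = c \<or> a = d" by simp
  then show ?thesis using assms by auto
qed

lemma sq_norm:
  fixes a b :: complex
  assumes "a\<^sup>2 = b\<^sup>2" shows "cmod a = cmod b"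
proof -
  have "(cmod a)\<^sup>2 = (cmod b)\<^sup>2" using assms by (metis norm_power)
  then show ?thesis by (rule power2_eq_imp_eq) simp_all
qed

lemma Phi_sat:
  assumes "\<Omega> = bidisk \<or> \<Omega> = unit_ball2" "Phi w = Phi z" "z \<in> \<Omega>"
  shows "w \<in> \<Omega>"
proof -
  obtain w1 w2 z1 z2 where w: "w = (w1,w2)" and z: "z = (z1,z2)" by force
  have "w1\<^sup>2 + w2\<^sup>2 = z1\<^sup>2 + z2\<^sup>2" "w1\<^sup>2 * w2\<^sup>2 = z1\<^sup>2 * z2\<^sup>2"
    using assms(2) by (auto simp: Phi_def w z)
  from sq_cases[OF this]
  have "(cmod w1 = cmod z1 \<and> cmod w2 = cmod z2) \<or> (cmod w1 = cmod z2 \<and> cmod w2 = cmod z1)"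
    using sq_norm by blast
  then show ?thesis using assms(1,3)
    by (auto simp: w z bidisk_def unit_ball2_def)
qed

lemma Phi_surj: "surj Phi"
proof -
  have "y \<in> range Phi" for y
  proof -
    obtain s p where y: "y = (s,p)" by force
    define r where "r = csqrt (s\<^sup>2 - 4*p)"
    define a where "a = (s + r)/2"
    define b where "b = (s - r)/2"
    have r2: "r\<^sup>2 = s\<^sup>2 - 4*p" by (simp add: r_def)
    have ab: "a + b = s" by (simp add: a_def b_def field_simps)
    have "a * b = (s\<^sup>2 - r\<^sup>2)/4" by (simp add: a_def b_def field_simps power2_eq_square)
    hence ab2: "a * b = p" using r2 by simp
    have "Phi (csqrt a, csqrt b) = y" using ab ab2 by (simp add: Phi_def y)
    then show ?thesis by (metis rangeI)
  qed
  then show ?thesis by blast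
qed

lemma Omega_open:
  assumes "\<Omega> = bidisk \<or> \<Omega> = unit_ball2" shows "open \<Omega>"
proof -
  have "open {z::complex\<times>complex. cmod (fst z) < 1 \<and> cmod (snd z) < 1}"
    by (intro open_Collect_conj open_Collect_less continuous_intros)
  moreover have "open {z::complex\<times>complex. (cmod (fst z))\<^sup>2 + (cmod (snd z))\<^sup>2 < 1}"
    by (intro open_Collect_less continuous_intros)
  moreover have "bidisk = {z. cmod (fst z) < 1 \<and> cmod (snd z) < 1}"
    "unit_ball2 = {z. (cmod (fst z))\<^sup>2 + (cmod (snd z))\<^sup>2 < 1}"
    by (auto simp: bidisk_def unit_ball2_def)
  ultimately show ?thesis using assms by auto
qed

lemma Phi_closed_image:
  assumes "closed C" shows "closed (Phi ` C)"
proof -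
  have "closedin (top_of_set UNIV) (Phi ` C)"
    by (rule proper_map[where S=UNIV]) (use assms Phi_compact_preimage in auto)
  then show ?thesis by simp
qed

lemma Phi_holo: "holomorphic2_on Phi S"
  unfolding holomorphic2_on_def
proof
  fix z :: "complex \<times> complex"
  obtain x y where z: "z = (x,y)" by force
  define D where "D = (\<lambda>v::complex\<times>complex. (2*x*fst v + 2*y * snd v,
      2*x*y\<^sup>2*fst v + 2*x\<^sup>2*y * snd v))"
  have "(Phi has_derivative D) (at z)"
    unfolding Phi_def D_def z
    by (auto intro!: derivative_eq_intros ext simp: algebra_simps power2_eq_square)
  moreover have "\<forall>c v. D (cscale2 c v) = cscale2 c (D v)"
    by (auto simp: D_def cscale2_def algebra_simps)
  ultimately show "\<exists>D. (Phi has_derivative D) (at z) \<and> (\<forall>c v. D (cscale2 c v) = cscale2 c (D v))"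
    by blast
qed

theorem proposition6p2:
  fixes \<Omega> :: "(complex \<times> complex) set"
  assumes "\<Omega> = bidisk \<or> \<Omega> = unit_ball2"
  shows "open (Phi ` \<Omega>) \<and> holomorphic2_on Phi \<Omega> \<and> proper_map_on Phi \<Omega> (Phi ` \<Omega>)"
proof (intro conjI)
  have eq: "Phi ` \<Omega> = - Phi ` (- \<Omega>)"
  proof
    show "Phi ` \<Omega> \<subseteq> - Phi ` (- \<Omega>)" using Phi_sat[OF assms] by fastforce
    show "- Phi ` (- \<Omega>) \<subseteq> Phi ` \<Omega>"
    proof
      fix y assume y: "y \<in> - Phi ` (- \<Omega>)"
      obtain z where "y = Phi z" using Phi_surj by (metis surjD)
      with y show "y \<in> Phi ` \<Omega>" by blast
    qed
  qed
  have "closed (Phi ` (- \<Omega>))"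
    using Phi_closed_image Omega_open[OF assms] by (simp add: closed_Compl)
  then show "open (Phi ` \<Omega>)" by (subst eq) (simp add: open_Compl)
  show "holomorphic2_on Phi \<Omega>" by (rule Phi_holo)
  show "proper_map_on Phi \<Omega> (Phi ` \<Omega>)"
    unfolding proper_map_on_def
  proof (intro allI impI)
    fix K assume K: "K \<subseteq> Phi ` \<Omega> \<and> compact K"
    have "{z \<in> \<Omega>. Phi z \<in> K} = Phi -` K"
      using K Phi_sat[OF assms] by fastforce
    then show "compact {z \<in> \<Omega>. Phi z \<in> K}" using Phi_compact_preimage K by simp
  qed
qed

end
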